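(* For every $\Upsilon\in\{\pi,\theta,\theta_B,\theta_{AB},\Psi\}$, the mapping $d_\Upsilon(N_1,N_2)=\frac12\big(|\Upsilon(N_1)\setminus\Upsilon(N_2)|+|\Upsilon(N_2)\setminus\Upsilon(N_1)|\big)$ defines a distance (up to isomorphism) on the class of all tree-child phylogenetic networks labeled in a fixed finite set $S$ in which no pair of parents of a hybrid node is connected by a path; that is, for all such $N_1,N_2,N_3$: $d_\Upsilon(N_1,N_2)\ge0$; $d_\Upsilon(N_1,N_2)=0$ iff $N_1\cong N_2$; $d_\Upsilon(N_1,N_2)=d_\Upsilon(N_2,N_1)$; and $d_\Upsilon(N_1,N_2)\le d_\Upsilon(N_1,N_3)+d_\Upsilon(N_3,N_2)$.
   Context: A DAG $N=(V,E)$ is labeled in $S$ if its leaves (out-degree 0) are bijectively labeled by $S$; $\cong$ means isomorphism of directed graphs preserving leaf labels. A tree node has in-degree at most 1; a hybrid node has in-degree greater than 1; a tree child is a child that is a tree node. A tree-child phylogenetic network is a rooted DAG labeled in $S$ in which every non-leaf node has at least one tree child, no tree node has out-degree 1, and every hybrid node has out-degree exactly 1. "No pair of parents of a hybrid node is connected by a path": if $u_1,u_2$ are parents of a hybrid node, there is no path $u_1\rightsquigarrow u_2$ nor $u_2\rightsquigarrow u_1$. For a node $v$: $C(v)$ is the set of descendant leaves; $A(v)$ the set of leaves $s$ such that every path from the root to $s$ contains $v$; $B(v)=C(v)\setminus A(v)$. For an arc $e=(u,v)$: $\pi(e)=(C(v),S\setminus C(v))$; $\theta(e)=(A(v),B(v),S\setminus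 C(v))$; $\theta_B(e)$ is $\theta(e)$ with each $s\in B(v)$ weighted by the maximum number of hybrid nodes on a path from $v$ to $s$ (including $v$ and $s$); $\theta_{AB}(e)$ is $\theta(e)$ with each $s\in A(v)\cup B(v)$ so weighted. An arc is a tree arc if its head is a tree node and a network arc otherwise; for a hybrid node $v$, $RS(v)=\{C(u)\mid u\text{ a parent of }v\}$; $\Psi(e)=\theta_{AB}(e)$ for a tree arc, $\Psi(e)=(\theta(e),RS(v))$ for a network arc with head $v$. For each $\Upsilon$, $\Upsilon(N)=\{\Upsilon(e)\mid e\in E\}$. *)

theory Defs
  imports Complex_Main
begin

record ('v, 's) net =
  nodes :: "'v set"
  arcs  :: "('v \<times> 'v) set"
  lab   :: "'v \<Rightarrow> 's"

definition indeg :: "('v,'s) net \<Rightarrow> 'v \<Rightarrow> nat" where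
  "indeg N v = card {u. (u, v) \<in> arcs N}"

definition outdeg :: "('v,'s) net \<Rightarrow> 'v \<Rightarrow> nat" where
  "outdeg N v = card {w. (v, w) \<in> arcs N}"

definition parents :: "('v,'s) net \<Rightarrow> 'v \<Rightarrow> 'v set" where
  "parents N v = {u. (u, v) \<in> arcs N}"

definition children :: "('v,'s) net \<Rightarrow> 'v \<Rightarrow> 'v set" where
  "children N v = {w. (v, w) \<in> arcs N}"

definition leaves :: "('v,'s) net \<Rightarrow> 'v set" where
  "leaves N = {v \<in> nodes N. outdeg N v = 0}"

definition tree_node :: "('v,'s) net \<Rightarrow> 'v \<Rightarrow> bool" where
  "tree_node N v \<longleftrightarrow> v \<in> nodes N \<and> indeg N v \<le> 1"

definition hybrid_node :: "('v,'s) net \<Rightarrow> 'v \<Rightarrow> bool" where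
  "hybrid_node N v \<longleftrightarrow> v \<in> nodes N \<and> indeg N v > 1"

definition rooted_dag :: "('v,'s) net \<Rightarrow> bool" where
  "rooted_dag N \<longleftrightarrow> finite (nodes N) \<and> arcs N \<subseteq> nodes N \<times> nodes N
     \<and> acyclic (arcs N)
     \<and> (\<exists>r \<in> nodes N. \<forall>v \<in> nodes N. (r, v) \<in> (arcs N)\<^sup>*)"

definition root :: "('v,'s) net \<Rightarrow> 'v" where
  "root N = (THE r. r \<in> nodes N \<and> (\<forall>v \<in> nodes N. (r, v) \<in> (arcs N)\<^sup>*))"

definition labeled_in :: "('v,'s) net \<Rightarrow> 's set \<Rightarrow> bool" where
  "labeled_in N S \<longleftrightarrow> bij_betw (lab N) (leaves N) S"

definition tree_child_network :: "'s set \<Rightarrow> ('v,'s) net \<Rightarrow> bool" where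
  "tree_child_network S N \<longleftrightarrow> rooted_dag N \<and> labeled_in N S
     \<and> (\<forall>v \<in> nodes N. v \<notin> leaves N \<longrightarrow> (\<exists>w \<in> children N v. tree_node N w))
     \<and> (\<forall>v \<in> nodes N. tree_node N v \<longrightarrow> outdeg N v \<noteq> 1)
     \<and> (\<forall>v \<in> nodes N. hybrid_node N v \<longrightarrow> outdeg N v = 1)"

definition no_parent_paths :: "('v,'s) net \<Rightarrow> bool" where
  "no_parent_paths N \<longleftrightarrow> (\<forall>v \<in> nodes N. hybrid_node N v \<longrightarrow>
     (\<forall>u1 \<in> parents N v. \<forall>u2 \<in> parents N v. u1 \<noteq> u2 \<longrightarrow> (u1, u2) \<notin> (arcs N)\<^sup>+))"

definition admissible :: "'s set \<Rightarrow> ('v,'s) net \<Rightarrow> bool" where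
  "admissible S N \<longleftrightarrow> tree_child_network S N \<and> no_parent_paths N"

definition net_iso :: "('v,'s) net \<Rightarrow> ('v,'s) net \<Rightarrow> bool" where
  "net_iso N1 N2 \<longleftrightarrow> (\<exists>f. bij_betw f (nodes N1) (nodes N2)
     \<and> (\<forall>u \<in> nodes N1. \<forall>v \<in> nodes N1. (u, v) \<in> arcs N1 \<longleftrightarrow> (f u, f v) \<in> arcs N2)
     \<and> (\<forall>v \<in> leaves N1. lab N2 (f v) = lab N1 v))"

definition is_path :: "('v,'s) net \<Rightarrow> 'v list \<Rightarrow> 'v \<Rightarrow> 'v \<Rightarrow> bool" where
  "is_path N xs u v \<longleftrightarrow> xs \<noteq> [] \<and> hd xs = u \<and> last xs = v \<and> set xs \<subseteq> nodes N
     \<and> (\<forall>i. Suc i < length xs \<longrightarrow> (xs ! i, xs ! Suc i) \<in> arcs N)"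

definition Cl :: "('v,'s) net \<Rightarrow> 'v \<Rightarrow> 's set" where
  "Cl N v = {lab N w | w. w \<in> leaves N \<and> (v, w) \<in> (arcs N)\<^sup>*}"

definition Al :: "('v,'s) net \<Rightarrow> 'v \<Rightarrow> 's set" where
  "Al N v = {lab N w | w. w \<in> leaves N \<and>
     (\<forall>xs. is_path N xs (root N) w \<longrightarrow> v \<in> set xs)}"

definition Bl :: "('v,'s) net \<Rightarrow> 'v \<Rightarrow> 's set" where
  "Bl N v = Cl N v - Al N v"

text \<open>Maximum number of hybrid nodes on a path from v to the leaf labeled s
  (endpoints included).\<close>
definition hweight :: "('v,'s) net \<Rightarrow> 'v \<Rightarrow> 's \<Rightarrow> nat" where
  "hweight N v s = Max {length (filter (hybrid_node N) xs) | xs w.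
      w \<in> leaves N \<and> lab N w = s \<and> is_path N xs v w}"

type_synonym 's wset = "('s \<times> nat) set"

definition weigh :: "('v,'s) net \<Rightarrow> 'v \<Rightarrow> 's set \<Rightarrow> 's wset" where
  "weigh N v X = {(s, hweight N v s) | s. s \<in> X}"

definition pi_arc :: "'s set \<Rightarrow> ('v,'s) net \<Rightarrow> 'v \<times> 'v \<Rightarrow> 's set \<times> 's set" where
  "pi_arc S N e = (Cl N (snd e), S - Cl N (snd e))"

definition theta_arc :: "'s set \<Rightarrow> ('v,'s) net \<Rightarrow> 'v \<times> 'v \<Rightarrow> 's set \<times> 's set \<times> 's set" where
  "theta_arc S N e = (Al N (snd e), Bl N (snd e), S - Cl N (snd e))"

definition thetaB_arc :: "'s set \<Rightarrow> ('v,'s) net \<Rightarrow> 'v \<times> 'v \<Rightarrow> 's set \<times> 's wset \<times> 's set" where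
  "thetaB_arc S N e = (Al N (snd e), weigh N (snd e) (Bl N (snd e)), S - Cl N (snd e))"

definition thetaAB_arc :: "'s set \<Rightarrow> ('v,'s) net \<Rightarrow> 'v \<times> 'v \<Rightarrow> 's wset \<times> 's wset \<times> 's set" where
  "thetaAB_arc S N e = (weigh N (snd e) (Al N (snd e)), weigh N (snd e) (Bl N (snd e)),
                        S - Cl N (snd e))"

definition RS :: "('v,'s) net \<Rightarrow> 'v \<Rightarrow> 's set set" where
  "RS N v = {Cl N u | u. u \<in> parents N v}"

definition Psi_arc :: "'s set \<Rightarrow> ('v,'s) net \<Rightarrow> 'v \<times> 'v \<Rightarrow>
    ('s wset \<times> 's wset \<times> 's set) + (('s set \<times> 's set \<times> 's set) \<times> 's set set)" where
  "Psi_arc S N e = (if tree_node N (snd e) then Inl (thetaAB_arc S N e)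
                    else Inr (theta_arc S N e, RS N (snd e)))"

definition rep_set :: "('s set \<Rightarrow> ('v,'s) net \<Rightarrow> 'v \<times> 'v \<Rightarrow> 'a) \<Rightarrow> 's set \<Rightarrow> ('v,'s) net \<Rightarrow> 'a set" where
  "rep_set U S N = U S N ` arcs N"

definition d_ups :: "('s set \<Rightarrow> ('v,'s) net \<Rightarrow> 'v \<times> 'v \<Rightarrow> 'a) \<Rightarrow> 's set \<Rightarrow>
    ('v,'s) net \<Rightarrow> ('v,'s) net \<Rightarrow> real" where
  "d_ups U S N1 N2 = (real (card (rep_set U S N1 - rep_set U S N2))
                    + real (card (rep_set U S N2 - rep_set U S N1))) / 2"

definition distance_up_to_iso :: "(('v,'s) net \<Rightarrow> bool) \<Rightarrow> (('v,'s) net \<Rightarrow> ('v,'s) net \<Rightarrow> real) \<Rightarrow> bool" where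
  "distance_up_to_iso P d \<longleftrightarrow> (\<forall>N1 N2 N3. P N1 \<and> P N2 \<and> P N3 \<longrightarrow>
      d N1 N2 \<ge> 0
    \<and> (d N1 N2 = 0 \<longleftrightarrow> net_iso N1 N2)
    \<and> d N1 N2 = d N2 N1
    \<and> d N1 N2 \<le> d N1 N3 + d N3 N2)"

end

theory Submission imports Defs begin

definition KK :: "('v,'s) net \<Rightarrow> 's set set" where
  "KK N = Cl N ` {v. tree_node N v}"
definition MM :: "'s set set \<Rightarrow> 's set \<Rightarrow> 's set set" where
  "MM K X = {Y \<in> K. X \<subset> Y \<and> \<not>(\<exists>Z\<in>K. X \<subset> Z \<and> Z \<subset> Y)}"

definition tn :: "('v,'s) net \<Rightarrow> 's set \<Rightarrow> 'v" where
  "tn N X = (THE v. tree_node N v \<and> Cl N v = X)"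
definition hn :: "('v,'s) net \<Rightarrow> 's set \<Rightarrow> 'v" where
  "hn N X = (THE v. hybrid_node N v \<and> Cl N v = X)"

locale adm =
  fixes S :: "'s set" and N :: "('v,'s) net"
  assumes adm: "admissible S N"
begin

abbreviation "R \<equiv> arcs N"
abbreviation "V \<equiv> nodes N"
definition "T = {(x,y). (x,y) \<in> R \<and> tree_node N y}"

lemma finV: "finite V" and RV: "R \<subseteq> V \<times> V" and acyc: "acyclic R"
  and rootex: "\<exists>r \<in> V. \<forall>v \<in> V. (r, v) \<in> R\<^sup>*"
  using adm unfolding admissible_def tree_child_network_def rooted_dag_def by auto

lemma labS: "bij_betw (lab N) (leaves N) S"
  using adm unfolding admissible_def tree_child_network_def labeled_in_def by auto

lemma tc: "v \<in> V \<Longrightarrow> v \<notin> leaves N \<Longrightarrow> \<exists>w \<in> children N v. tree_node N w"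
  and tree_out: "v \<in> V \<Longrightarrow> tree_node N v \<Longrightarrow> outdeg N v \<noteq> 1"
  and hyb_out: "v \<in> V \<Longrightarrow> hybrid_node N v \<Longrightarrow> outdeg N v = 1"
  using adm unfolding admissible_def tree_child_network_def by auto

lemma npp: "hybrid_node N v \<Longrightarrow> u1 \<in> parents N v \<Longrightarrow> u2 \<in> parents N v \<Longrightarrow> u1 \<noteq> u2
   \<Longrightarrow> (u1, u2) \<notin> R\<^sup>+"
  using adm unfolding admissible_def no_parent_paths_def hybrid_node_def by auto

lemma finR: "finite R" using RV finV finite_subset by blast

lemma arcV1: "(u,v) \<in> R \<Longrightarrow> u \<in> V" and arcV2: "(u,v) \<in> R \<Longrightarrow> v \<in> V"
  using RV by auto

lemma rtV: "(u,v) \<in> R\<^sup>* \<Longrightarrow> u \<in> V \<Longrightarrow> v \<in> V"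
  by (induction rule: rtrancl_induct) (auto dest: arcV2)

lemma tV: "(u,v) \<in> R\<^sup>+ \<Longrightarrow> v \<in> V"
  by (metis arcV2 tranclD2)

lemma tV1: "(u,v) \<in> R\<^sup>+ \<Longrightarrow> u \<in> V"
  by (metis arcV1 tranclD)

lemma noloop: "(x,x) \<notin> R\<^sup>+" using acyc unfolding acyclic_def by auto

lemma fin_par: "finite (parents N v)"
proof -
  have "parents N v \<subseteq> fst ` R" unfolding parents_def by force
  thus ?thesis using finR by (meson finite_imageI rev_finite_subset)
qed

lemma fin_ch: "finite (children N v)"
proof -
  have "children N v \<subseteq> snd ` R" unfolding children_def by force
  thus ?thesis using finR by (meson finite_imageI rev_finite_subset)
qed

lemma tree_hyb: "v \<in> V \<Longrightarrow> tree_node N v \<or> hybrid_node N v"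
  unfolding tree_node_def hybrid_node_def by auto

lemma not_tree_hyb: "tree_node N v \<Longrightarrow> \<not> hybrid_node N v"
  unfolding tree_node_def hybrid_node_def by auto

lemma tree_par: "tree_node N z \<Longrightarrow> (p,z) \<in> R \<Longrightarrow> (q,z) \<in> R \<Longrightarrow> p = q"
proof -
  assume "tree_node N z" "(p,z) \<in> R" "(q,z) \<in> R"
  hence "card (parents N z) \<le> 1" "p \<in> parents N z" "q \<in> parents N z"
    unfolding tree_node_def indeg_def parents_def by auto
  thus ?thesis using fin_par[of z] by (metis One_nat_def card_le_Suc0_iff_eq)
qed

lemma leaf_iff: "v \<in> leaves N \<longleftrightarrow> v \<in> V \<and> children N v = {}"
  using fin_ch unfolding leaves_def outdeg_def children_def by auto

lemma hyb_child: "hybrid_node N h \<Longrightarrow> \<exists>c. children N h = {c} \<and> tree_node N c"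
proof -
  assume h: "hybrid_node N h"
  hence hV: "h \<in> V" unfolding hybrid_node_def by auto
  have "card (children N h) = 1" using hyb_out[OF hV h] unfolding outdeg_def children_def by simp
  then obtain c where c: "children N h = {c}" by (meson card_1_singletonE)
  hence "h \<notin> leaves N" using leaf_iff by auto
  then obtain w where "w \<in> children N h" "tree_node N w" using tc hV by blast
  thus ?thesis using c by auto
qed

lemma hyb_par2: "hybrid_node N h \<Longrightarrow> \<exists>a b. a \<in> parents N h \<and> b \<in> parents N h \<and> a \<noteq> b"
proof -
  assume "hybrid_node N h"
  hence "1 < card (parents N h)" unfolding hybrid_node_def indeg_def parents_def by auto
  thus ?thesis using fin_par[of h] by (metis One_nat_def card_le_Suc0_iff_eq not_le)
qed

lemma hyb_par_tree: "hybrid_node N h \<Longrightarrow> a \<in> parents N h \<Longrightarrow> tree_node N a"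
proof -
  assume h: "hybrid_node N h" and a: "a \<in> parents N h"
  hence aV: "a \<in> V" "(a,h) \<in> R" using arcV1 unfolding parents_def by auto
  have "a \<notin> leaves N" using aV leaf_iff unfolding children_def by auto
  then obtain w where w: "w \<in> children N a" "tree_node N w" using tc aV by blast
  show ?thesis
  proof (rule ccontr)
    assume "\<not> tree_node N a"
    hence ha: "hybrid_node N a" using tree_hyb aV by auto
    then obtain c where "children N a = {c}" "tree_node N c" using hyb_child by blast
    moreover have "h \<in> children N a" using aV unfolding children_def by auto
    ultimately show False using w h not_tree_hyb by auto
  qed
qed

lemma nonleaf_tree_children: "tree_node N v \<Longrightarrow> v \<notin> leaves N \<Longrightarrow>
   \<exists>w w'. (v,w) \<in> R \<and> tree_node N w \<and> (v,w') \<in> R \<and> w \<noteq> w'"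
proof -
  assume t: "tree_node N v" and nl: "v \<notin> leaves N"
  have vV: "v \<in> V" using t unfolding tree_node_def by auto
  obtain w where w: "w \<in> children N v" "tree_node N w" using tc vV nl by blast
  have "outdeg N v \<noteq> 1" using tree_out vV t by auto
  moreover have "outdeg N v \<noteq> 0" using nl vV unfolding leaves_def by auto
  ultimately have "card (children N v) \<ge> 2" unfolding outdeg_def children_def by simp
  then obtain w' where "w' \<in> children N v" "w' \<noteq> w"
  proof -
    assume *: "\<And>w'. w' \<in> children N v \<Longrightarrow> w' \<noteq> w \<Longrightarrow> thesis"
    show thesis
    proof (rule ccontr)
      assume "\<not> thesis"
      hence "children N v \<subseteq> {w}" using * by auto
      hence "card (children N v) \<le> 1" by (metis card_le_Suc0_iff_eq One_nat_def insert_absorb insert_not_empty singleton_insert_inj_eq subset_singleton_iff card.empty card_0_eq fin_ch le_refl)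
      thus False using \<open>card (children N v) \<ge> 2\<close> by simp
    qed
  qed
  thus ?thesis using w unfolding children_def by auto
qed

lemma uniq_up: "tree_node N z \<Longrightarrow> (y,z) \<in> R \<Longrightarrow> (q,z) \<in> R\<^sup>+ \<Longrightarrow> (q,y) \<in> R\<^sup>*"
  using tranclD2 tree_par by metis

lemma TR: "T \<subseteq> R" unfolding T_def by auto

lemma G: "(x,z) \<in> T\<^sup>* \<Longrightarrow> (q,z) \<in> R\<^sup>* \<Longrightarrow> (q,x) \<in> R\<^sup>* \<or> (x,q) \<in> T\<^sup>+"
proof (induction arbitrary: q rule: rtrancl_induct)
  case base
  then show ?case by auto
next
  case (step y z)
  show ?case
  proof (cases "q = z")
    case True
    then show ?thesis using step(1,2) by (meson rtrancl_into_trancl1)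
  next
    case False
    hence "(q,z) \<in> R\<^sup>+" using step(4) by (meson rtranclD)
    hence "(q,y) \<in> R\<^sup>*" using uniq_up step(2) unfolding T_def by auto
    then show ?thesis using step(3) by auto
  qed
qed

lemma Tp_R: "(x,y) \<in> T\<^sup>+ \<Longrightarrow> (x,y) \<in> R\<^sup>+" using TR trancl_mono by blast
lemma Ts_R: "(x,y) \<in> T\<^sup>* \<Longrightarrow> (x,y) \<in> R\<^sup>*" using TR rtrancl_mono by blast

lemma wfc: "wf (R\<inverse>)"
  using finR acyc by (simp add: wf_iff_acyclic_if_finite acyclic_converse)

lemma has_leaf: "v \<in> V \<Longrightarrow> \<exists>l \<in> leaves N. (v,l) \<in> T\<^sup>*"
proof (induction v rule: wf_induct_rule[OF wfc])
  case (1 v)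
  show ?case
  proof (cases "v \<in> leaves N")
    case True thus ?thesis by auto
  next
    case False
    then obtain w where w: "w \<in> children N v" "tree_node N w" using tc 1(2) by blast
    hence "(v,w) \<in> R" unfolding children_def by auto
    moreover have "w \<in> V" using w unfolding tree_node_def by auto
    ultimately obtain l where "l \<in> leaves N" "(w,l) \<in> T\<^sup>*" using 1(1) by auto
    moreover have "(v,w) \<in> T" using \<open>(v,w) \<in> R\<close> w unfolding T_def by auto
    ultimately show ?thesis by (meson converse_rtrancl_into_rtrancl)
  qed
qed


lemma labinj: "inj_on (lab N) (leaves N)" using labS bij_betw_def by blast

lemma Cl_in: "(v,l) \<in> R\<^sup>* \<Longrightarrow> l \<in> leaves N \<Longrightarrow> lab N l \<in> Cl N v"
  unfolding Cl_def by auto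

lemma Cl_reach: "lab N l \<in> Cl N v \<Longrightarrow> l \<in> leaves N \<Longrightarrow> (v,l) \<in> R\<^sup>*"
  unfolding Cl_def using labinj by (auto dest: inj_onD)

lemma Cl_mono: "(u,v) \<in> R\<^sup>* \<Longrightarrow> Cl N v \<subseteq> Cl N u"
proof
  fix s assume u: "(u,v) \<in> R\<^sup>*" and "s \<in> Cl N v"
  then obtain w where "s = lab N w" "w \<in> leaves N" "(v,w) \<in> R\<^sup>*" unfolding Cl_def by auto
  moreover have "(u,w) \<in> R\<^sup>*" using u calculation(3) by (rule rtrancl_trans)
  ultimately show "s \<in> Cl N u" unfolding Cl_def by auto
qed

lemma Cl_mono': "(u,v) \<in> R\<^sup>+ \<Longrightarrow> Cl N v \<subseteq> Cl N u"
  by (rule Cl_mono[OF trancl_into_rtrancl])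

lemma Cl_ne: "v \<in> V \<Longrightarrow> Cl N v \<noteq> {}"
  using has_leaf Cl_in Ts_R by blast

lemma Cl_S: "Cl N v \<subseteq> S"
  unfolding Cl_def using labS bij_betw_imp_surj_on by blast

lemma X: "(u,w) \<in> R \<Longrightarrow> tree_node N w \<Longrightarrow> (u,w') \<in> R \<Longrightarrow> w \<noteq> w' \<Longrightarrow>
   (w,w') \<in> R\<^sup>+ \<or> (w',w) \<in> R\<^sup>+ \<Longrightarrow> False"
proof -
  assume uw: "(u,w) \<in> R" and tw: "tree_node N w" and uw': "(u,w') \<in> R" and ne: "w \<noteq> w'"
    and d: "(w,w') \<in> R\<^sup>+ \<or> (w',w) \<in> R\<^sup>+"
  show False
  proof (cases "(w',w) \<in> R\<^sup>+")
    case True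
    hence "(w',u) \<in> R\<^sup>*" using uniq_up tw uw by blast
    hence "(u,u) \<in> R\<^sup>+" using uw' by (meson converse_rtrancl_into_rtrancl rtrancl_into_trancl2 rtranclD)
    thus False using noloop by blast
  next
    case False
    hence ww': "(w,w') \<in> R\<^sup>+" using d by blast
    then obtain p where p: "(w,p) \<in> R\<^sup>*" "(p,w') \<in> R" using tranclD2 by metis
    have up: "(u,p) \<in> R\<^sup>+" using uw p(1) by (meson rtrancl_into_trancl2)
    show False
    proof (cases "tree_node N w'")
      case True
      hence "p = u" using tree_par p(2) uw' by blast
      thus False using up noloop by blast
    next
      case False
      hence h: "hybrid_node N w'" using tree_hyb arcV2[OF uw'] by blast
      show False
      proof (cases "p = u")
        case True thus False using up noloop by blast
      next
        case False
        thus False using npp[OF h, of u p] up p(2) uw' unfolding parents_def by auto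
      qed
    qed
  qed
qed

lemma inj_core: "tree_node N u \<Longrightarrow> (u,v) \<in> R\<^sup>+ \<Longrightarrow> Cl N u \<subseteq> Cl N v \<Longrightarrow> False"
proof -
  assume tu: "tree_node N u" and uv: "(u,v) \<in> R\<^sup>+" and sub: "Cl N u \<subseteq> Cl N v"
  have "u \<notin> leaves N" using uv leaf_iff unfolding children_def by (auto dest: tranclD)
  then obtain w w' where w: "(u,w) \<in> R" "tree_node N w" "(u,w') \<in> R" "w \<noteq> w'"
    using nonleaf_tree_children tu by blast
  obtain l where l: "l \<in> leaves N" "(w,l) \<in> T\<^sup>*" using has_leaf arcV2 w(1) by blast
  have "lab N l \<in> Cl N v" using sub Cl_mono[of u w] w(1) Cl_in[OF Ts_R[OF l(2)] l(1)] by auto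
  hence "(v,l) \<in> R\<^sup>*" using Cl_reach l(1) by blast
  hence "(v,w) \<in> R\<^sup>* \<or> (w,v) \<in> T\<^sup>+" using G l(2) by blast
  hence wv: "(w,v) \<in> R\<^sup>*"
  proof
    assume "(v,w) \<in> R\<^sup>*"
    show ?thesis
    proof (cases "v = w")
      case True thus ?thesis by auto
    next
      case False
      hence "(v,w) \<in> R\<^sup>+" using \<open>(v,w) \<in> R\<^sup>*\<close> by (meson rtranclD)
      hence "(v,u) \<in> R\<^sup>*" using uniq_up w by blast
      hence "(u,u) \<in> R\<^sup>+" using uv by (meson rtrancl_into_trancl1 trancl_rtrancl_trancl)
      thus ?thesis using noloop by blast
    qed
  next
    assume "(w,v) \<in> T\<^sup>+" thus ?thesis by (rule trancl_into_rtrancl[OF Tp_R])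
  qed
  obtain l' where l': "l' \<in> leaves N" "(w',l') \<in> T\<^sup>*" using has_leaf arcV2 w(3) by blast
  have "lab N l' \<in> Cl N v" using sub Cl_mono[of u w'] w(3) Cl_in[OF Ts_R[OF l'(2)] l'(1)] by auto
  hence "(v,l') \<in> R\<^sup>*" using Cl_reach l'(1) by blast
  hence "(v,w') \<in> R\<^sup>* \<or> (w',v) \<in> T\<^sup>+" using G l'(2) by blast
  thus False
  proof
    assume "(v,w') \<in> R\<^sup>*"
    hence "(w,w') \<in> R\<^sup>*" using wv by auto
    hence "(w,w') \<in> R\<^sup>+" using w(4) by (meson rtranclD)
    thus False using X w by blast
  next
    assume "(w',v) \<in> T\<^sup>+"
    hence "(w,w') \<in> R\<^sup>* \<or> (w',w) \<in> T\<^sup>+" by (rule G[OF trancl_into_rtrancl wv])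
    thus False
    proof
      assume "(w,w') \<in> R\<^sup>*"
      hence "(w,w') \<in> R\<^sup>+" using w(4) by (meson rtranclD)
      thus False using X w by blast
    next
      assume "(w',w) \<in> T\<^sup>+" thus False using X w Tp_R by blast
    qed
  qed
qed

lemma tree_inj: "tree_node N u \<Longrightarrow> tree_node N v \<Longrightarrow> Cl N u = Cl N v \<Longrightarrow> u = v"
proof (rule ccontr)
  assume tu: "tree_node N u" and tv: "tree_node N v" and eq: "Cl N u = Cl N v" and ne: "u \<noteq> v"
  obtain l where l: "l \<in> leaves N" "(u,l) \<in> T\<^sup>*" using has_leaf tu unfolding tree_node_def by blast
  have "(v,l) \<in> R\<^sup>*" using Cl_reach l(1) eq Cl_in[OF Ts_R[OF l(2)] l(1)] by auto
  hence "(v,u) \<in> R\<^sup>* \<or> (u,v) \<in> T\<^sup>+" using G l(2) by blast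
  thus False
  proof
    assume "(v,u) \<in> R\<^sup>*"
    hence "(v,u) \<in> R\<^sup>+" using ne by (metis rtranclD)
    thus False using inj_core tv eq by blast
  next
    assume "(u,v) \<in> T\<^sup>+"
    thus False using inj_core tu eq Tp_R by blast
  qed
qed

lemma Cl_leaf: "v \<in> leaves N \<Longrightarrow> Cl N v = {lab N v}"
proof -
  assume v: "v \<in> leaves N"
  have "(v,x) \<in> R\<^sup>* \<Longrightarrow> x = v" for x
    using v leaf_iff unfolding children_def by (auto elim: converse_rtranclE)
  thus ?thesis using v unfolding Cl_def by auto
qed

lemma leaf_tree: "v \<in> leaves N \<Longrightarrow> tree_node N v"
  using hyb_out tree_hyb unfolding leaves_def by fastforce

lemma single_leaf: "tree_node N v \<Longrightarrow> Cl N v = {s} \<Longrightarrow> v \<in> leaves N"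
proof (rule ccontr)
  assume t: "tree_node N v" and c: "Cl N v = {s}" and nl: "v \<notin> leaves N"
  have vV: "v \<in> V" using t unfolding tree_node_def by auto
  then obtain w where "(v,w) \<in> R" using nl leaf_iff unfolding children_def by auto
  hence "Cl N w \<subseteq> {s}" "Cl N w \<noteq> {}" using Cl_mono c Cl_ne arcV2 by auto
  hence "Cl N v \<subseteq> Cl N w" using c by auto
  thus False using inj_core t \<open>(v,w) \<in> R\<close> by blast
qed

lemma hyb_Cl: "hybrid_node N h \<Longrightarrow> children N h = {c} \<Longrightarrow> Cl N h = Cl N c"
proof -
  assume h: "hybrid_node N h" and c: "children N h = {c}"
  have hV: "h \<in> V" using h unfolding hybrid_node_def by auto
  have hl: "h \<notin> leaves N" using c leaf_iff by auto
  have "(h,c) \<in> R" using c unfolding children_def by auto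
  hence "Cl N c \<subseteq> Cl N h" using Cl_mono by blast
  moreover have "(h,x) \<in> R\<^sup>* \<Longrightarrow> x \<in> leaves N \<Longrightarrow> (c,x) \<in> R\<^sup>*" for x
    using c hl unfolding children_def by (auto elim: converse_rtranclE)
  hence "Cl N h \<subseteq> Cl N c" unfolding Cl_def by auto
  ultimately show ?thesis by auto
qed

lemma hyb_inj: "hybrid_node N h1 \<Longrightarrow> hybrid_node N h2 \<Longrightarrow> Cl N h1 = Cl N h2 \<Longrightarrow> h1 = h2"
proof -
  assume h1: "hybrid_node N h1" and h2: "hybrid_node N h2" and eq: "Cl N h1 = Cl N h2"
  obtain c1 where c1: "children N h1 = {c1}" "tree_node N c1" using hyb_child h1 by blast
  obtain c2 where c2: "children N h2 = {c2}" "tree_node N c2" using hyb_child h2 by blast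
  have "c1 = c2" using tree_inj c1 c2 hyb_Cl h1 h2 eq by metis
  thus ?thesis using tree_par c1 c2 unfolding children_def by blast
qed


lemma claim1: "tree_node N c \<Longrightarrow> Cl N c \<subset> Cl N q \<Longrightarrow> (q,c) \<in> R\<^sup>+"
proof -
  assume tc: "tree_node N c" and sub: "Cl N c \<subset> Cl N q"
  obtain l where l: "l \<in> leaves N" "(c,l) \<in> T\<^sup>*" using has_leaf tc unfolding tree_node_def by blast
  have "(q,l) \<in> R\<^sup>*" using Cl_reach l(1) sub Cl_in[OF Ts_R[OF l(2)] l(1)] by auto
  hence "(q,c) \<in> R\<^sup>* \<or> (c,q) \<in> T\<^sup>+" using G l(2) by blast
  thus ?thesis
  proof
    assume "(q,c) \<in> R\<^sup>*"
    moreover have "q \<noteq> c" using sub by auto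
    ultimately show ?thesis by (metis rtranclD)
  next
    assume "(c,q) \<in> T\<^sup>+"
    hence "Cl N q \<subseteq> Cl N c" using Cl_mono' Tp_R by blast
    thus ?thesis using sub by auto
  qed
qed

lemma Mgen:
  assumes tc: "tree_node N c" and U: "\<forall>a\<in>U. tree_node N a \<and> Cl N c \<subset> Cl N a"
    and ii: "\<forall>q. tree_node N q \<longrightarrow> Cl N c \<subset> Cl N q \<longrightarrow> (\<exists>a\<in>U. (q,a) \<in> R\<^sup>*)"
    and iii: "\<forall>a\<in>U. \<forall>a'\<in>U. Cl N a \<subseteq> Cl N a' \<longrightarrow> a = a'"
  shows "MM (KK N) (Cl N c) = Cl N ` U"
proof
  show "MM (KK N) (Cl N c) \<subseteq> Cl N ` U"
  proof
    fix Y assume "Y \<in> MM (KK N) (Cl N c)"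
    then obtain q where q: "tree_node N q" "Y = Cl N q" "Cl N c \<subset> Cl N q"
      and min: "\<not>(\<exists>Z\<in>KK N. Cl N c \<subset> Z \<and> Z \<subset> Cl N q)" unfolding MM_def KK_def by auto
    obtain a where a: "a \<in> U" "(q,a) \<in> R\<^sup>*" using ii q by blast
    have "Cl N a \<in> KK N" using U a unfolding KK_def by auto
    moreover have "Cl N a \<subseteq> Cl N q" using Cl_mono[OF a(2)] .
    moreover have "Cl N c \<subset> Cl N a" using U a(1) by blast
    ultimately have "Cl N a = Cl N q" using min by (meson psubsetI)
    thus "Y \<in> Cl N ` U" using q a by auto
  qed
next
  show "Cl N ` U \<subseteq> MM (KK N) (Cl N c)"
  proof
    fix Y assume "Y \<in> Cl N ` U"
    then obtain a where a: "a \<in> U" "Y = Cl N a" by auto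
    have "\<not>(\<exists>Z\<in>KK N. Cl N c \<subset> Z \<and> Z \<subset> Cl N a)"
    proof
      assume "\<exists>Z\<in>KK N. Cl N c \<subset> Z \<and> Z \<subset> Cl N a"
      then obtain q where q: "tree_node N q" "Cl N c \<subset> Cl N q" "Cl N q \<subset> Cl N a"
        unfolding KK_def by auto
      obtain a' where a': "a' \<in> U" "(q,a') \<in> R\<^sup>*" using ii q by blast
      have "Cl N a' \<subseteq> Cl N a" using Cl_mono[OF a'(2)] q(3) by auto
      hence "a' = a" using iii a a' by blast
      thus False using Cl_mono[OF a'(2)] q(3) by auto
    qed
    thus "Y \<in> MM (KK N) (Cl N c)" using a U unfolding MM_def KK_def by auto
  qed
qed

lemma MP0: "tree_node N c \<Longrightarrow> parents N c = {} \<Longrightarrow> MM (KK N) (Cl N c) = {}"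
proof -
  assume tc: "tree_node N c" and np: "parents N c = {}"
  have "MM (KK N) (Cl N c) = Cl N ` {}"
  proof (rule Mgen[OF tc], simp, intro allI impI)
    fix q assume "tree_node N q" "Cl N c \<subset> Cl N q"
    hence "(q,c) \<in> R\<^sup>+" using claim1 tc by blast
    then obtain p where "(p,c) \<in> R" using tranclD2 by metis
    thus "\<exists>a\<in>{}. (q, a) \<in> R\<^sup>*" using np unfolding parents_def by auto
  qed simp
  thus ?thesis by simp
qed

lemma MP1: "tree_node N c \<Longrightarrow> (p,c) \<in> R \<Longrightarrow> tree_node N p \<Longrightarrow> MM (KK N) (Cl N c) = {Cl N p}"
proof -
  assume tc: "tree_node N c" and pc: "(p,c) \<in> R" and tp: "tree_node N p"
  have "Cl N c \<subseteq> Cl N p" using Cl_mono pc by blast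
  moreover have "\<not> Cl N p \<subseteq> Cl N c" using inj_core tp pc by blast
  ultimately have "MM (KK N) (Cl N c) = Cl N ` {p}"
  proof (intro Mgen[OF tc])
    show "\<forall>q. tree_node N q \<longrightarrow> Cl N c \<subset> Cl N q \<longrightarrow> (\<exists>a\<in>{p}. (q, a) \<in> R\<^sup>*)"
      using claim1 tc uniq_up pc by blast
  qed (use tp in auto)
  thus ?thesis by simp
qed

lemma MP2: "tree_node N c \<Longrightarrow> (h,c) \<in> R \<Longrightarrow> hybrid_node N h \<Longrightarrow>
   MM (KK N) (Cl N c) = Cl N ` parents N h"
proof (rule Mgen)
  assume tc: "tree_node N c" and hc: "(h,c) \<in> R" and hh: "hybrid_node N h"
  show "\<forall>a\<in>parents N h. tree_node N a \<and> Cl N c \<subset> Cl N a"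
  proof
    fix a assume a: "a \<in> parents N h"
    hence ta: "tree_node N a" using hyb_par_tree hh by blast
    have "(a,c) \<in> R\<^sup>+" using a hc unfolding parents_def by auto
    thus "tree_node N a \<and> Cl N c \<subset> Cl N a" using ta inj_core Cl_mono' by blast
  qed
  show "\<forall>q. tree_node N q \<longrightarrow> Cl N c \<subset> Cl N q \<longrightarrow> (\<exists>a\<in>parents N h. (q, a) \<in> R\<^sup>*)"
  proof (intro allI impI)
    fix q assume tq: "tree_node N q" and sub: "Cl N c \<subset> Cl N q"
    hence "(q,c) \<in> R\<^sup>+" using claim1 tc by blast
    hence "(q,h) \<in> R\<^sup>*" using uniq_up tc hc by blast
    moreover have "q \<noteq> h" using tq hh not_tree_hyb by blast
    ultimately have "(q,h) \<in> R\<^sup>+" by (metis rtranclD)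
    then obtain a where "(q,a) \<in> R\<^sup>*" "(a,h) \<in> R" using tranclD2 by metis
    thus "\<exists>a\<in>parents N h. (q, a) \<in> R\<^sup>*" unfolding parents_def by auto
  qed
  show "\<forall>a\<in>parents N h. \<forall>a'\<in>parents N h. Cl N a \<subseteq> Cl N a' \<longrightarrow> a = a'"
  proof (intro ballI impI, rule ccontr)
    fix a a' assume a: "a \<in> parents N h" and a': "a' \<in> parents N h" and sub: "Cl N a \<subseteq> Cl N a'"
      and ne: "a \<noteq> a'"
    have "a \<in> V" using a arcV1 unfolding parents_def by auto
    then obtain l where l: "l \<in> leaves N" "(a,l) \<in> T\<^sup>*" using has_leaf by blast
    have "(a',l) \<in> R\<^sup>*" using Cl_reach l(1) sub Cl_in[OF Ts_R[OF l(2)] l(1)] by auto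
    hence "(a',a) \<in> R\<^sup>* \<or> (a,a') \<in> T\<^sup>+" using G l(2) by blast
    thus False
    proof
      assume "(a',a) \<in> R\<^sup>*"
      hence "(a',a) \<in> R\<^sup>+" using ne by (metis rtranclD)
      thus False using npp hh a a' ne by blast
    next
      assume "(a,a') \<in> T\<^sup>+"
      thus False using npp hh a a' ne Tp_R by blast
    qed
  qed
qed

lemma card2: "hybrid_node N h \<Longrightarrow> 2 \<le> card (Cl N ` parents N h)"
proof -
  assume hh: "hybrid_node N h"
  obtain a b where ab: "a \<in> parents N h" "b \<in> parents N h" "a \<noteq> b" using hyb_par2 hh by blast
  have "Cl N a \<noteq> Cl N b" using tree_inj hyb_par_tree hh ab by blast
  hence "card {Cl N a, Cl N b} = 2" by simp
  moreover have "{Cl N a, Cl N b} \<subseteq> Cl N ` parents N h" using ab by auto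
  ultimately show ?thesis using fin_par by (metis card_mono finite_imageI)
qed


lemma MPcase: "tree_node N v \<Longrightarrow> parents N v = {} \<or> (\<exists>p. (p,v) \<in> R \<and> tree_node N p)
   \<or> (\<exists>p. (p,v) \<in> R \<and> hybrid_node N p)"
  using tree_hyb arcV1 unfolding parents_def by blast

lemma tt_arc: "tree_node N u \<Longrightarrow> tree_node N v \<Longrightarrow> (u,v) \<in> R \<longleftrightarrow> MM (KK N) (Cl N v) = {Cl N u}"
proof
  assume "tree_node N u" "tree_node N v" "(u,v) \<in> R" thus "MM (KK N) (Cl N v) = {Cl N u}" using MP1 by blast
next
  assume tu: "tree_node N u" and tv: "tree_node N v" and M: "MM (KK N) (Cl N v) = {Cl N u}"
  show "(u,v) \<in> R"
    using MPcase[OF tv]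
  proof (elim disjE exE conjE)
    assume "parents N v = {}" thus ?thesis using MP0[OF tv] M by simp
  next
    fix p assume pv: "(p,v) \<in> R" and tp: "tree_node N p"
    hence "Cl N p = Cl N u" using MP1[OF tv pv tp] M by simp
    hence "p = u" using tree_inj[OF tp tu] by simp
    thus ?thesis using pv by simp
  next
    fix p assume pv: "(p,v) \<in> R" and hp: "hybrid_node N p"
    hence "2 \<le> card (MM (KK N) (Cl N v))" using MP2[OF tv pv hp] card2[OF hp] by simp
    thus ?thesis using M by simp
  qed
qed

lemma ht_arc: "hybrid_node N u \<Longrightarrow> tree_node N v \<Longrightarrow> (u,v) \<in> R \<longleftrightarrow> Cl N u = Cl N v"
proof -
  assume hu: "hybrid_node N u" and tv: "tree_node N v"
  obtain c where c: "children N u = {c}" "tree_node N c" using hyb_child hu by blast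
  have "Cl N u = Cl N c" using hyb_Cl hu c by blast
  moreover have "(u,v) \<in> R \<longleftrightarrow> v = c" using c(1) unfolding children_def by blast
  moreover have "v = c \<longleftrightarrow> Cl N v = Cl N c" using tree_inj[OF tv c(2)] by auto
  ultimately show ?thesis by (simp add: eq_commute)
qed

lemma th_arc: "tree_node N u \<Longrightarrow> hybrid_node N v \<Longrightarrow> (u,v) \<in> R \<longleftrightarrow> Cl N u \<in> MM (KK N) (Cl N v)"
proof -
  assume tu: "tree_node N u" and hv: "hybrid_node N v"
  obtain c where c: "children N v = {c}" "tree_node N c" using hyb_child hv by blast
  have "Cl N v = Cl N c" using hyb_Cl hv c by blast
  moreover have "MM (KK N) (Cl N c) = Cl N ` parents N v"
    using MP2 c hv unfolding children_def by blast
  ultimately have "Cl N u \<in> MM (KK N) (Cl N v) \<longleftrightarrow> (\<exists>a \<in> parents N v. Cl N u = Cl N a)" by auto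
  also have "\<dots> \<longleftrightarrow> u \<in> parents N v"
  proof
    assume "\<exists>a \<in> parents N v. Cl N u = Cl N a"
    then obtain a where a: "a \<in> parents N v" "Cl N u = Cl N a" by blast
    hence "u = a" using tree_inj[OF tu hyb_par_tree[OF hv a(1)]] by simp
    thus "u \<in> parents N v" using a by simp
  qed auto
  finally show ?thesis unfolding parents_def by auto
qed

lemma hh_arc: "hybrid_node N u \<Longrightarrow> hybrid_node N v \<Longrightarrow> (u,v) \<notin> R"
proof
  assume hu: "hybrid_node N u" and hv: "hybrid_node N v" and uv: "(u,v) \<in> R"
  obtain c where c: "children N u = {c}" "tree_node N c" using hyb_child hu by blast
  hence "v = c" using uv unfolding children_def by blast
  thus False using hv not_tree_hyb c(2) by blast
qed

lemma hyb_ex: "(\<exists>h. hybrid_node N h \<and> Cl N h = X) \<longleftrightarrow> X \<in> KK N \<and> 2 \<le> card (MM (KK N) X)"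
proof
  assume "\<exists>h. hybrid_node N h \<and> Cl N h = X"
  then obtain h where h: "hybrid_node N h" "Cl N h = X" by blast
  obtain c where c: "children N h = {c}" "tree_node N c" using hyb_child h by blast
  have "Cl N h = Cl N c" using hyb_Cl h c by blast
  moreover have "MM (KK N) (Cl N c) = Cl N ` parents N h"
    using MP2 c h unfolding children_def by blast
  ultimately show "X \<in> KK N \<and> 2 \<le> card (MM (KK N) X)" using card2 h c unfolding KK_def by auto
next
  assume X: "X \<in> KK N \<and> 2 \<le> card (MM (KK N) X)"
  then obtain c where c: "tree_node N c" "X = Cl N c" unfolding KK_def by auto
  show "\<exists>h. hybrid_node N h \<and> Cl N h = X"
    using MPcase[OF c(1)]
  proof (elim disjE exE conjE)
    assume "parents N c = {}" thus ?thesis using MP0 c X by auto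
  next
    fix p assume "(p,c) \<in> R" "tree_node N p"
    thus ?thesis using MP1 c X by auto
  next
    fix p assume pc: "(p,c) \<in> R" and hp: "hybrid_node N p"
    obtain c' where c': "children N p = {c'}" "tree_node N c'" using hyb_child hp by blast
    hence "c' = c" using pc unfolding children_def by auto
    thus ?thesis using hyb_Cl hp c' c by blast
  qed
qed

lemma tn_eq: "tree_node N v \<Longrightarrow> tn N (Cl N v) = v"
  unfolding tn_def using tree_inj by (rule_tac the_equality) auto

lemma hn_eq: "hybrid_node N v \<Longrightarrow> hn N (Cl N v) = v"
  unfolding hn_def using hyb_inj by (rule_tac the_equality) auto

end

lemma sep:
  assumes A1: "admissible S N1" and A2: "admissible S N2" and K: "KK N1 = KK N2"
  shows "net_iso N1 N2"
proof -
  interpret a1: adm S N1 by (rule adm.intro[OF A1])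
  interpret a2: adm S N2 by (rule adm.intro[OF A2])
  define f where "f v = (if tree_node N1 v then tn N2 (Cl N1 v) else hn N2 (Cl N1 v))" for v
  have ft: "tree_node N2 (f v) \<and> Cl N2 (f v) = Cl N1 v" if "tree_node N1 v" for v
  proof -
    have "Cl N1 v \<in> KK N2" using K that unfolding KK_def by auto
    then obtain w where w: "tree_node N2 w" "Cl N2 w = Cl N1 v" unfolding KK_def by auto
    thus ?thesis using a2.tn_eq[OF w(1)] that unfolding f_def by auto
  qed
  have fh: "hybrid_node N2 (f v) \<and> Cl N2 (f v) = Cl N1 v" if "hybrid_node N1 v" for v
  proof -
    have "\<exists>w. hybrid_node N2 w \<and> Cl N2 w = Cl N1 v"
      using a1.hyb_ex[of "Cl N1 v"] a2.hyb_ex[of "Cl N1 v"] K that by auto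
    then obtain w where w: "hybrid_node N2 w" "Cl N2 w = Cl N1 v" by blast
    thus ?thesis using a2.hn_eq[OF w(1)] that a1.not_tree_hyb unfolding f_def by auto
  qed
  have fV: "f v \<in> nodes N2" if "v \<in> nodes N1" for v
    using a1.tree_hyb[OF that] ft fh unfolding tree_node_def hybrid_node_def by blast
  have fCl: "Cl N2 (f v) = Cl N1 v" if "v \<in> nodes N1" for v
    using a1.tree_hyb[OF that] ft fh by blast
  have ftree: "tree_node N2 (f v) \<longleftrightarrow> tree_node N1 v" if "v \<in> nodes N1" for v
    using a1.tree_hyb[OF that] ft fh a2.not_tree_hyb a1.not_tree_hyb by blast
  have fhyb: "hybrid_node N2 (f v) \<longleftrightarrow> hybrid_node N1 v" if "v \<in> nodes N1" for v
    using a1.tree_hyb[OF that] ft fh a2.not_tree_hyb a1.not_tree_hyb by blast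
  have inj: "inj_on f (nodes N1)"
  proof
    fix u v assume u: "u \<in> nodes N1" and v: "v \<in> nodes N1" and e: "f u = f v"
    show "u = v"
      using a1.tree_hyb[OF u] a1.tree_hyb[OF v]
    proof (elim disjE)
      assume "tree_node N1 u" "tree_node N1 v" thus ?thesis using a1.tree_inj fCl u v e by metis
    next
      assume "hybrid_node N1 u" "hybrid_node N1 v" thus ?thesis using a1.hyb_inj fCl u v e by metis
    next
      assume "tree_node N1 u" "hybrid_node N1 v" thus ?thesis using ftree fhyb u v e a2.not_tree_hyb by metis
    next
      assume "hybrid_node N1 u" "tree_node N1 v" thus ?thesis using ftree fhyb u v e a2.not_tree_hyb by metis
    qed
  qed
  have surj: "nodes N2 \<subseteq> f ` nodes N1"
  proof
    fix w assume w: "w \<in> nodes N2"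
    show "w \<in> f ` nodes N1"
      using a2.tree_hyb[OF w]
    proof
      assume tw: "tree_node N2 w"
      have "Cl N2 w \<in> KK N1" using K tw unfolding KK_def by auto
      then obtain v where v: "tree_node N1 v" "Cl N1 v = Cl N2 w" unfolding KK_def by auto
      hence "f v = w" using a2.tn_eq[OF tw] unfolding f_def by auto
      thus ?thesis using v unfolding tree_node_def by auto
    next
      assume hw: "hybrid_node N2 w"
      have "\<exists>v. hybrid_node N1 v \<and> Cl N1 v = Cl N2 w"
        using a1.hyb_ex[of "Cl N2 w"] a2.hyb_ex[of "Cl N2 w"] K hw by auto
      then obtain v where v: "hybrid_node N1 v" "Cl N1 v = Cl N2 w" by blast
      hence "f v = w" using a2.hn_eq[OF hw] a1.not_tree_hyb unfolding f_def by auto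
      thus ?thesis using v unfolding hybrid_node_def by auto
    qed
  qed
  have bij: "bij_betw f (nodes N1) (nodes N2)"
    unfolding bij_betw_def using inj surj fV by auto
  have arcs: "(u, v) \<in> arcs N1 \<longleftrightarrow> (f u, f v) \<in> arcs N2" if u: "u \<in> nodes N1" and v: "v \<in> nodes N1" for u v
    using a1.tree_hyb[OF u] a1.tree_hyb[OF v]
  proof (elim disjE)
    assume "tree_node N1 u" "tree_node N1 v"
    thus ?thesis using a1.tt_arc a2.tt_arc ft K by metis
  next
    assume "hybrid_node N1 u" "hybrid_node N1 v"
    thus ?thesis using a1.hh_arc a2.hh_arc fh by metis
  next
    assume "tree_node N1 u" "hybrid_node N1 v"
    thus ?thesis using a1.th_arc a2.th_arc ft fh K by metis
  next
    assume "hybrid_node N1 u" "tree_node N1 v"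
    thus ?thesis using a1.ht_arc a2.ht_arc ft fh by metis
  qed
  have labs: "lab N2 (f v) = lab N1 v" if v: "v \<in> leaves N1" for v
  proof -
    have tv: "tree_node N1 v" using a1.leaf_tree v by blast
    have c1: "Cl N1 v = {lab N1 v}" using a1.Cl_leaf v by blast
    have "tree_node N2 (f v)" "Cl N2 (f v) = {lab N1 v}" using ft tv c1 by auto
    hence "f v \<in> leaves N2" "Cl N2 (f v) = {lab N1 v}" using a2.single_leaf by auto
    thus ?thesis using a2.Cl_leaf by auto
  qed
  show ?thesis unfolding net_iso_def using bij arcs labs by blast
qed


context adm begin
lemma root_eq: "r \<in> V \<Longrightarrow> \<forall>v\<in>V. (r,v) \<in> R\<^sup>* \<Longrightarrow> root N = r"
proof -
  assume r: "r \<in> V" "\<forall>v\<in>V. (r,v) \<in> R\<^sup>*"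
  have u: "r' \<in> V \<Longrightarrow> \<forall>v\<in>V. (r',v) \<in> R\<^sup>* \<Longrightarrow> r' = r" for r'
  proof (rule ccontr)
    assume r': "r' \<in> V" "\<forall>v\<in>V. (r',v) \<in> R\<^sup>*" "r' \<noteq> r"
    hence "(r,r') \<in> R\<^sup>+" using r by (metis rtranclD)
    moreover have "(r',r) \<in> R\<^sup>*" using r'(2) r(1) by blast
    ultimately have "(r,r) \<in> R\<^sup>+" by (rule trancl_rtrancl_trancl)
    thus False using noloop by blast
  qed
  show ?thesis unfolding root_def
  proof (rule the_equality)
    show "r \<in> V \<and> (\<forall>v\<in>V. (r, v) \<in> R\<^sup>*)" using r by blast
    show "\<And>x. x \<in> V \<and> (\<forall>v\<in>V. (x, v) \<in> R\<^sup>*) \<Longrightarrow> x = r" using u by blast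
  qed
qed

lemma root_prop: "root N \<in> V \<and> (\<forall>v\<in>V. (root N, v) \<in> R\<^sup>*)"
proof -
  obtain r where r: "r \<in> V" "\<forall>v\<in>V. (r, v) \<in> R\<^sup>*" using rootex by blast
  hence "root N = r" by (rule root_eq)
  thus ?thesis using r by simp
qed
end

locale isom =
  fixes S :: "'s set" and N1 N2 :: "('v,'s) net" and f :: "'v \<Rightarrow> 'v"
  assumes A1: "admissible S N1" and A2: "admissible S N2"
    and bij: "bij_betw f (nodes N1) (nodes N2)"
    and arcs: "\<forall>u \<in> nodes N1. \<forall>v \<in> nodes N1. (u, v) \<in> arcs N1 \<longleftrightarrow> (f u, f v) \<in> arcs N2"
    and labs: "\<forall>v \<in> leaves N1. lab N2 (f v) = lab N1 v"
begin

sublocale a1: adm S N1 by (rule adm.intro[OF A1])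
sublocale a2: adm S N2 by (rule adm.intro[OF A2])

abbreviation "g \<equiv> inv_into (nodes N1) f"

lemma fV: "v \<in> nodes N1 \<Longrightarrow> f v \<in> nodes N2" using bij bij_betwE by blast
lemma gV: "w \<in> nodes N2 \<Longrightarrow> g w \<in> nodes N1" using bij by (metis bij_betw_imp_surj_on inv_into_into)
lemma gf: "v \<in> nodes N1 \<Longrightarrow> g (f v) = v" using bij bij_betw_def inv_into_f_f by metis
lemma fg: "w \<in> nodes N2 \<Longrightarrow> f (g w) = w" using bij bij_betw_def f_inv_into_f by metis
lemma injf: "inj_on f (nodes N1)" using bij bij_betw_def by blast

lemma arcs2: "arcs N2 = (\<lambda>(u,v). (f u, f v)) ` arcs N1"
proof
  show "arcs N2 \<subseteq> (\<lambda>(u,v). (f u, f v)) ` arcs N1"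
  proof
    fix e assume e: "e \<in> arcs N2"
    obtain x y where xy: "e = (x,y)" by fastforce
    have "x \<in> nodes N2" "y \<in> nodes N2" using e xy a2.RV by auto
    hence "(g x, g y) \<in> arcs N1" using arcs gV fg e xy by metis
    moreover have "e = (f (g x), f (g y))" using xy \<open>x \<in> nodes N2\<close> \<open>y \<in> nodes N2\<close> fg by auto
    ultimately show "e \<in> (\<lambda>(u,v). (f u, f v)) ` arcs N1" by force
  qed
next
  show "(\<lambda>(u,v). (f u, f v)) ` arcs N1 \<subseteq> arcs N2" using arcs a1.RV by auto
qed

lemma sym: "isom S N2 N1 g"
proof
  show "admissible S N2" "admissible S N1" using A1 A2 by auto
  show "bij_betw g (nodes N2) (nodes N1)" using bij by (rule bij_betw_inv_into)
  show "\<forall>u\<in>nodes N2. \<forall>v\<in>nodes N2. ((u, v) \<in> arcs N2) = ((g u, g v) \<in> arcs N1)"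
    using arcs gV fg by metis
  have lv: "v \<in> leaves N2 \<Longrightarrow> g v \<in> leaves N1" for v
  proof -
    assume v: "v \<in> leaves N2"
    hence vV: "v \<in> nodes N2" unfolding leaves_def by auto
    have "children N1 (g v) = {}"
    proof (rule ccontr)
      assume "children N1 (g v) \<noteq> {}"
      then obtain w where "(g v, w) \<in> arcs N1" unfolding children_def by auto
      hence "(v, f w) \<in> arcs N2" using arcs fg vV gV a1.arcV2 by metis
      thus False using v a2.leaf_iff unfolding children_def by auto
    qed
    thus ?thesis using a1.leaf_iff gV vV by auto
  qed
  show "\<forall>v\<in>leaves N2. lab N1 (g v) = lab N2 v"
  proof
    fix v assume v: "v \<in> leaves N2"
    hence "lab N2 (f (g v)) = lab N1 (g v)" using labs lv by blast
    moreover have "f (g v) = v" using fg v unfolding leaves_def by blast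
    ultimately show "lab N1 (g v) = lab N2 v" by simp
  qed
qed

lemma par: "v \<in> nodes N1 \<Longrightarrow> parents N2 (f v) = f ` parents N1 v"
proof
  assume v: "v \<in> nodes N1"
  show "parents N2 (f v) \<subseteq> f ` parents N1 v"
  proof
    fix x assume "x \<in> parents N2 (f v)"
    hence x: "(x, f v) \<in> arcs N2" unfolding parents_def by simp
    hence xV: "x \<in> nodes N2" using a2.arcV1 by blast
    hence "(f (g x), f v) \<in> arcs N2" using x fg by simp
    hence "(g x, v) \<in> arcs N1" using arcs gV[OF xV] v by blast
    thus "x \<in> f ` parents N1 v" using fg[OF xV] unfolding parents_def by force
  qed
  show "f ` parents N1 v \<subseteq> parents N2 (f v)"
    using arcs a1.arcV1 v unfolding parents_def by blast
qed

lemma chl: "v \<in> nodes N1 \<Longrightarrow> children N2 (f v) = f ` children N1 v"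
proof
  assume v: "v \<in> nodes N1"
  show "children N2 (f v) \<subseteq> f ` children N1 v"
  proof
    fix x assume "x \<in> children N2 (f v)"
    hence x: "(f v, x) \<in> arcs N2" unfolding children_def by simp
    hence xV: "x \<in> nodes N2" using a2.arcV2 by blast
    hence "(f v, f (g x)) \<in> arcs N2" using x fg by simp
    hence "(v, g x) \<in> arcs N1" using arcs gV[OF xV] v by blast
    thus "x \<in> f ` children N1 v" using fg[OF xV] unfolding children_def by force
  qed
  show "f ` children N1 v \<subseteq> children N2 (f v)"
    using arcs a1.arcV2 v unfolding children_def by blast
qed

lemma indeg: "v \<in> nodes N1 \<Longrightarrow> indeg N2 (f v) = indeg N1 v"
proof -
  assume v: "v \<in> nodes N1"
  have "parents N1 v \<subseteq> nodes N1" using a1.arcV1 unfolding parents_def by auto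
  hence "card (f ` parents N1 v) = card (parents N1 v)" using injf by (meson card_image inj_on_subset)
  thus ?thesis using par v unfolding indeg_def parents_def by simp
qed

lemma outdeg: "v \<in> nodes N1 \<Longrightarrow> outdeg N2 (f v) = outdeg N1 v"
proof -
  assume v: "v \<in> nodes N1"
  have "children N1 v \<subseteq> nodes N1" using a1.arcV2 unfolding children_def by auto
  hence "card (f ` children N1 v) = card (children N1 v)" using injf by (meson card_image inj_on_subset)
  thus ?thesis using chl v unfolding outdeg_def children_def by simp
qed

lemma tree: "v \<in> nodes N1 \<Longrightarrow> tree_node N2 (f v) \<longleftrightarrow> tree_node N1 v"
  using indeg fV unfolding tree_node_def by auto
lemma hyb: "v \<in> nodes N1 \<Longrightarrow> hybrid_node N2 (f v) \<longleftrightarrow> hybrid_node N1 v"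
  using indeg fV unfolding hybrid_node_def by auto
lemma leaf: "v \<in> nodes N1 \<Longrightarrow> f v \<in> leaves N2 \<longleftrightarrow> v \<in> leaves N1"
  using outdeg fV unfolding leaves_def by auto

lemma rt: "(u,v) \<in> (arcs N1)\<^sup>* \<Longrightarrow> (f u, f v) \<in> (arcs N2)\<^sup>*"
proof (induction rule: rtrancl_induct)
  case base thus ?case by auto
next
  case (step y z)
  hence "(f y, f z) \<in> arcs N2" using arcs2 by force
  thus ?case using step by auto
qed

lemma path: "is_path N1 xs u v \<Longrightarrow> is_path N2 (map f xs) (f u) (f v)"
proof -
  assume p: "is_path N1 xs u v"
  have "(f (xs ! i), f (xs ! Suc i)) \<in> arcs N2" if i: "Suc i < length xs" for i
  proof -
    have "(xs ! i, xs ! Suc i) \<in> arcs N1" using p i unfolding is_path_def by blast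
    thus ?thesis using arcs a1.RV by blast
  qed
  thus ?thesis using p fV unfolding is_path_def by (auto simp: hd_map last_map)
qed

lemma root: "root N2 = f (root N1)"
proof (rule a2.root_eq)
  show "f (root N1) \<in> nodes N2" using fV a1.root_prop by blast
  show "\<forall>v\<in>nodes N2. (f (root N1), v) \<in> (arcs N2)\<^sup>*"
    using a1.root_prop rt fg gV by metis
qed

lemma Cl_sub: "Cl N1 v \<subseteq> Cl N2 (f v)"
proof
  fix s assume "s \<in> Cl N1 v"
  then obtain w where w: "s = lab N1 w" "w \<in> leaves N1" "(v,w) \<in> (arcs N1)\<^sup>*" unfolding Cl_def by auto
  have "f w \<in> leaves N2" using leaf w unfolding leaves_def by auto
  moreover have "lab N2 (f w) = s" using w labs by simp
  moreover have "(f v, f w) \<in> (arcs N2)\<^sup>*" by (rule rt[OF w(3)])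
  ultimately show "s \<in> Cl N2 (f v)" unfolding Cl_def by blast
qed

end

lemma isom_Cl: "isom S N1 N2 f \<Longrightarrow> v \<in> nodes N1 \<Longrightarrow> Cl N2 (f v) = Cl N1 v"
proof -
  assume i: "isom S N1 N2 f" and v: "v \<in> nodes N1"
  interpret isom S N1 N2 f by (rule i)
  interpret r: isom S N2 N1 g by (rule sym)
  show ?thesis using Cl_sub r.Cl_sub[of "f v"] gf v by auto
qed


definition Hset :: "('v,'s) net \<Rightarrow> 'v \<Rightarrow> 's \<Rightarrow> nat set" where
  "Hset N v s = {length (filter (hybrid_node N) xs) | xs w.
      w \<in> leaves N \<and> lab N w = s \<and> is_path N xs v w}"

lemma hweight_Hset: "hweight N v s = Max (Hset N v s)"
  unfolding hweight_def Hset_def by simp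

context isom begin

lemma Al_sub: "v \<in> nodes N1 \<Longrightarrow> Al N1 v \<subseteq> Al N2 (f v)"
proof
  fix s assume v: "v \<in> nodes N1" and "s \<in> Al N1 v"
  then obtain w where w: "s = lab N1 w" "w \<in> leaves N1"
    and all: "\<forall>xs. is_path N1 xs (root N1) w \<longrightarrow> v \<in> set xs" unfolding Al_def by auto
  interpret r: isom S N2 N1 g by (rule sym)
  have wV: "w \<in> nodes N1" using w unfolding leaves_def by auto
  have fl: "f w \<in> leaves N2" using leaf wV w by auto
  have "\<forall>ys. is_path N2 ys (root N2) (f w) \<longrightarrow> f v \<in> set ys"
  proof (intro allI impI)
    fix ys assume "is_path N2 ys (root N2) (f w)"
    hence "is_path N1 (map g ys) (g (root N2)) (g (f w))" by (rule r.path)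
    moreover have "g (root N2) = root N1" using root gf a1.root_prop by auto
    ultimately have "is_path N1 (map g ys) (root N1) w" using gf wV by auto
    hence "v \<in> set (map g ys)" using all by blast
    then obtain y where y: "y \<in> set ys" "v = g y" by auto
    have "set ys \<subseteq> nodes N2" using \<open>is_path N2 ys (root N2) (f w)\<close> unfolding is_path_def by auto
    thus "f v \<in> set ys" using y fg by auto
  qed
  thus "s \<in> Al N2 (f v)" using fl w labs unfolding Al_def by force
qed

lemma Hset_sub: "v \<in> nodes N1 \<Longrightarrow> Hset N1 v s \<subseteq> Hset N2 (f v) s"
proof
  fix n assume v: "v \<in> nodes N1" and "n \<in> Hset N1 v s"
  then obtain xs w where xw: "n = length (filter (hybrid_node N1) xs)" "w \<in> leaves N1"
    "lab N1 w = s" "is_path N1 xs v w" unfolding Hset_def by auto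
  have sx: "set xs \<subseteq> nodes N1" using xw unfolding is_path_def by auto
  have "filter (hybrid_node N2) (map f xs) = map f (filter (hybrid_node N1) xs)"
    using sx hyb by (induction xs) auto
  hence "n = length (filter (hybrid_node N2) (map f xs))" using xw by simp
  moreover have "f w \<in> leaves N2" "lab N2 (f w) = s" using leaf labs xw unfolding leaves_def by auto
  moreover have "is_path N2 (map f xs) (f v) (f w)" using path xw by blast
  ultimately show "n \<in> Hset N2 (f v) s" unfolding Hset_def by blast
qed

end

lemma isom_eqs:
  assumes i: "isom S N1 N2 f" and v: "v \<in> nodes N1"
  shows "Cl N2 (f v) = Cl N1 v" "Al N2 (f v) = Al N1 v" "Bl N2 (f v) = Bl N1 v"
    "hweight N2 (f v) s = hweight N1 v s" "tree_node N2 (f v) = tree_node N1 v"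
    "RS N2 (f v) = RS N1 v"
proof -
  interpret isom S N1 N2 f by (rule i)
  interpret r: isom S N2 N1 g by (rule sym)
  show c: "Cl N2 (f v) = Cl N1 v" by (rule isom_Cl[OF i v])
  show a: "Al N2 (f v) = Al N1 v" using Al_sub[OF v] r.Al_sub[of "f v"] gf v fV by auto
  show "Bl N2 (f v) = Bl N1 v" using a c unfolding Bl_def by simp
  have "Hset N2 (f v) s = Hset N1 v s" using Hset_sub[OF v] r.Hset_sub[of "f v"] gf v fV by auto
  thus "hweight N2 (f v) s = hweight N1 v s" by (simp add: hweight_Hset)
  show "tree_node N2 (f v) = tree_node N1 v" using tree v by blast
  have pv: "parents N1 v \<subseteq> nodes N1" using a1.arcV1 unfolding parents_def by auto
  have "RS N2 (f v) = Cl N2 ` parents N2 (f v)" unfolding RS_def by auto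
  also have "\<dots> = Cl N2 ` f ` parents N1 v" using par v by simp
  also have "\<dots> = (\<lambda>x. Cl N2 (f x)) ` parents N1 v" by (simp add: image_image)
  also have "\<dots> = Cl N1 ` parents N1 v"
  proof (rule image_cong)
    fix x assume "x \<in> parents N1 v"
    thus "Cl N2 (f x) = Cl N1 x" using isom_Cl[OF i] pv by blast
  qed simp
  also have "\<dots> = RS N1 v" unfolding RS_def by auto
  finally show "RS N2 (f v) = RS N1 v" .
qed

lemma isom_weigh: "isom S N1 N2 f \<Longrightarrow> v \<in> nodes N1 \<Longrightarrow> weigh N2 (f v) X = weigh N1 v X"
  unfolding weigh_def using isom_eqs(4) by fastforce

definition good_rep :: "('s set \<Rightarrow> ('v,'s) net \<Rightarrow> 'v \<times> 'v \<Rightarrow> 'a) \<Rightarrow> bool" where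
  "good_rep U \<longleftrightarrow> (\<forall>S N1 N2 f u v. isom S N1 N2 f \<longrightarrow> v \<in> nodes N1 \<longrightarrow> U S N2 (f u, f v) = U S N1 (u, v))"

lemma good_pi: "good_rep pi_arc"
  unfolding good_rep_def by (intro allI impI) (simp add: pi_arc_def isom_eqs)
lemma good_theta: "good_rep theta_arc"
  unfolding good_rep_def by (intro allI impI) (simp add: theta_arc_def isom_eqs)
lemma good_thetaB: "good_rep thetaB_arc"
  unfolding good_rep_def by (intro allI impI) (simp add: thetaB_arc_def isom_eqs isom_weigh)
lemma good_thetaAB: "good_rep thetaAB_arc"
  unfolding good_rep_def by (intro allI impI) (simp add: thetaAB_arc_def isom_eqs isom_weigh)
lemma good_Psi: "good_rep Psi_arc"
  unfolding good_rep_def by (intro allI impI) (simp add: Psi_arc_def thetaAB_arc_def theta_arc_def isom_eqs isom_weigh)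

lemma good_rep_set: "good_rep U \<Longrightarrow> isom S N1 N2 f \<Longrightarrow> rep_set U S N2 = rep_set U S N1"
proof -
  assume g: "good_rep U" and i: "isom S N1 N2 f"
  interpret isom S N1 N2 f by (rule i)
  have "rep_set U S N2 = U S N2 ` (\<lambda>(u,v). (f u, f v)) ` arcs N1" unfolding rep_set_def using arcs2 by simp
  also have "\<dots> = (\<lambda>e. U S N2 (f (fst e), f (snd e))) ` arcs N1"
    by (simp add: image_image case_prod_beta)
  also have "\<dots> = U S N1 ` arcs N1"
  proof (rule image_cong)
    fix e assume e: "e \<in> arcs N1"
    hence "snd e \<in> nodes N1" using a1.RV by auto
    hence "U S N2 (f (fst e), f (snd e)) = U S N1 (fst e, snd e)"
      using g i unfolding good_rep_def by blast
    thus "U S N2 (f (fst e), f (snd e)) = U S N1 e" by simp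
  qed simp
  finally show ?thesis unfolding rep_set_def .
qed


context adm begin

lemma root_nopar: "parents N (root N) = {}"
proof (rule ccontr)
  assume "parents N (root N) \<noteq> {}"
  then obtain p where p: "(p, root N) \<in> R" unfolding parents_def by auto
  hence "(root N, p) \<in> R\<^sup>*" using root_prop arcV1 by blast
  thus False using p noloop by (meson rtrancl_into_trancl1)
qed

lemma root_tree: "tree_node N (root N)"
  using root_nopar root_prop unfolding tree_node_def indeg_def parents_def by auto

lemma Cl_root: "Cl N (root N) = S"
proof
  show "Cl N (root N) \<subseteq> S" by (rule Cl_S)
  show "S \<subseteq> Cl N (root N)"
  proof
    fix s assume "s \<in> S"
    then obtain w where "w \<in> leaves N" "s = lab N w" using labS by (metis bij_betw_imp_surj_on imageE)
    moreover hence "(root N, w) \<in> R\<^sup>*" using root_prop unfolding leaves_def by auto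
    ultimately show "s \<in> Cl N (root N)" using Cl_in by auto
  qed
qed

lemma nopar_root: "v \<in> V \<Longrightarrow> parents N v = {} \<Longrightarrow> v = root N"
proof (rule ccontr)
  assume v: "v \<in> V" "parents N v = {}" "v \<noteq> root N"
  hence "(root N, v) \<in> R\<^sup>+" using root_prop by (metis rtranclD)
  then obtain p where "(p,v) \<in> R" using tranclD2 by metis
  thus False using v unfolding parents_def by auto
qed

lemma KK_pi: "KK N = insert S (fst ` rep_set pi_arc S N)"
proof -
  have fe: "fst ` rep_set pi_arc S N = Cl N ` snd ` R"
    unfolding rep_set_def pi_arc_def by (auto simp: image_image)
  have "KK N \<subseteq> insert S (Cl N ` snd ` R)"
  proof
    fix X assume "X \<in> KK N"
    then obtain v where v: "tree_node N v" "X = Cl N v" unfolding KK_def by auto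
    have vV: "v \<in> V" using v unfolding tree_node_def by auto
    show "X \<in> insert S (Cl N ` snd ` R)"
    proof (cases "parents N v = {}")
      case True thus ?thesis using nopar_root vV v Cl_root by auto
    next
      case False
      then obtain p where "(p,v) \<in> R" unfolding parents_def by auto
      thus ?thesis using v by force
    qed
  qed
  moreover have "insert S (Cl N ` snd ` R) \<subseteq> KK N"
  proof
    fix X assume X: "X \<in> insert S (Cl N ` snd ` R)"
    show "X \<in> KK N"
    proof (cases "X = S")
      case True thus ?thesis using root_tree Cl_root unfolding KK_def by force
    next
      case False
      then obtain u v where uv: "(u,v) \<in> R" "X = Cl N v" using X by force
      show ?thesis
        using tree_hyb[OF arcV2[OF uv(1)]]
      proof
        assume "tree_node N v" thus ?thesis using uv unfolding KK_def by auto
      next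
        assume h: "hybrid_node N v"
        then obtain c where "children N v = {c}" "tree_node N c" using hyb_child by blast
        thus ?thesis using hyb_Cl h uv unfolding KK_def by auto
      qed
    qed
  qed
  ultimately show ?thesis using fe by auto
qed

lemma fin_rep: "finite (rep_set U S N)" unfolding rep_set_def using finR by simp

end

lemma card_tri: "finite A \<Longrightarrow> finite B \<Longrightarrow> finite C \<Longrightarrow>
  card (A - B) \<le> card (A - C) + card (C - B)"
proof -
  assume f: "finite A" "finite B" "finite C"
  have "A - B \<subseteq> (A - C) \<union> (C - B)" by auto
  hence "card (A - B) \<le> card ((A - C) \<union> (C - B))" using f by (meson card_mono finite_Diff finite_UnI)
  also have "\<dots> \<le> card (A - C) + card (C - B)" by (rule card_Un_le)
  finally show ?thesis .
qed

lemma main: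
  fixes U :: "'s set \<Rightarrow> ('v,'s) net \<Rightarrow> 'v \<times> 'v \<Rightarrow> 'a"
  assumes g: "good_rep U"
    and h: "\<forall>N. admissible S N \<longrightarrow> rep_set pi_arc S N = hh ` rep_set U S N"
  shows "distance_up_to_iso (admissible S :: ('v,'s) net \<Rightarrow> bool) (d_ups U S)"
  unfolding distance_up_to_iso_def
proof (intro allI impI conjI)
  fix N1 N2 N3 :: "('v,'s) net"
  assume A: "admissible S N1 \<and> admissible S N2 \<and> admissible S N3"
  interpret a1: adm S N1 using A adm.intro by blast
  interpret a2: adm S N2 using A adm.intro by blast
  interpret a3: adm S N3 using A adm.intro by blast
  have f1: "finite (rep_set U S N1)" "finite (rep_set U S N2)" "finite (rep_set U S N3)"
    using a1.fin_rep a2.fin_rep a3.fin_rep by auto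
  show "0 \<le> d_ups U S N1 N2" unfolding d_ups_def by simp
  show "d_ups U S N1 N2 = d_ups U S N2 N1" unfolding d_ups_def by simp
  show "d_ups U S N1 N2 \<le> d_ups U S N1 N3 + d_ups U S N3 N2"
    using card_tri[OF f1(1) f1(2) f1(3)] card_tri[OF f1(2) f1(1) f1(3)]
    unfolding d_ups_def by (simp add: field_simps)
  show "d_ups U S N1 N2 = 0 \<longleftrightarrow> net_iso N1 N2"
  proof
    assume "d_ups U S N1 N2 = 0"
    hence "card (rep_set U S N1 - rep_set U S N2) = 0" "card (rep_set U S N2 - rep_set U S N1) = 0"
      unfolding d_ups_def by auto
    hence "rep_set U S N1 = rep_set U S N2" using f1 by auto
    hence "rep_set pi_arc S N1 = rep_set pi_arc S N2" using h A by metis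
    hence "KK N1 = KK N2" using a1.KK_pi a2.KK_pi by simp
    thus "net_iso N1 N2" using sep A by blast
  next
    assume "net_iso N1 N2"
    then obtain f where "isom S N1 N2 f" unfolding net_iso_def using A isom.intro by metis
    hence "rep_set U S N2 = rep_set U S N1" using good_rep_set g by blast
    thus "d_ups U S N1 N2 = 0" unfolding d_ups_def by simp
  qed
qed

theorem corollary10:
  fixes S :: "'s set"
  assumes "finite S"
  shows "distance_up_to_iso (admissible S :: ('v,'s) net \<Rightarrow> bool) (d_ups pi_arc S)
       \<and> distance_up_to_iso (admissible S :: ('v,'s) net \<Rightarrow> bool) (d_ups theta_arc S)
       \<and> distance_up_to_iso (admissible S :: ('v,'s) net \<Rightarrow> bool) (d_ups thetaB_arc S)
       \<and> distance_up_to_iso (admissible S :: ('v,'s) net \<Rightarrow> bool) (d_ups thetaAB_arc S)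
       \<and> distance_up_to_iso (admissible S :: ('v,'s) net \<Rightarrow> bool) (d_ups Psi_arc S)"
proof -
  have ClS: "S - (S - Cl N v) = Cl N v" if "admissible S N" for N :: "('v,'s) net" and v
    using adm.Cl_S[OF adm.intro[OF that]] by blast
  have p1: "distance_up_to_iso (admissible S :: ('v,'s) net \<Rightarrow> bool) (d_ups pi_arc S)"
    by (rule main[OF good_pi, where hh=id]) simp
  have p2: "distance_up_to_iso (admissible S :: ('v,'s) net \<Rightarrow> bool) (d_ups theta_arc S)"
    by (rule main[OF good_theta, where hh="\<lambda>(a,b,x). (S - x, x)"])
       (auto simp: rep_set_def pi_arc_def theta_arc_def image_image ClS)
  have p3: "distance_up_to_iso (admissible S :: ('v,'s) net \<Rightarrow> bool) (d_ups thetaB_arc S)"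
    by (rule main[OF good_thetaB, where hh="\<lambda>(a,b,x). (S - x, x)"])
       (auto simp: rep_set_def pi_arc_def thetaB_arc_def image_image ClS)
  have p4: "distance_up_to_iso (admissible S :: ('v,'s) net \<Rightarrow> bool) (d_ups thetaAB_arc S)"
    by (rule main[OF good_thetaAB, where hh="\<lambda>(a,b,x). (S - x, x)"])
       (auto simp: rep_set_def pi_arc_def thetaAB_arc_def image_image ClS)
  define hp :: "('s wset \<times> 's wset \<times> 's set) + (('s set \<times> 's set \<times> 's set) \<times> 's set set) \<Rightarrow> 's set \<times> 's set"
    where "hp = (\<lambda>z. case z of Inl (a,b,x) \<Rightarrow> (S - x, x) | Inr ((a,b,x),r) \<Rightarrow> (S - x, x))"
  have hpe: "hp (Psi_arc S N e) = pi_arc S N e" if "admissible S N" for N :: "('v,'s) net" and e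
    unfolding hp_def Psi_arc_def thetaAB_arc_def theta_arc_def pi_arc_def using ClS[OF that] by simp
  have p5: "distance_up_to_iso (admissible S :: ('v,'s) net \<Rightarrow> bool) (d_ups Psi_arc S)"
  proof (rule main[OF good_Psi, where hh=hp], intro allI impI)
    fix N :: "('v,'s) net" assume a: "admissible S N"
    have "hp ` rep_set Psi_arc S N = (\<lambda>e. hp (Psi_arc S N e)) ` arcs N"
      unfolding rep_set_def by (simp add: image_image)
    also have "\<dots> = rep_set pi_arc S N" unfolding rep_set_def using hpe[OF a] by simp
    finally show "rep_set pi_arc S N = hp ` rep_set Psi_arc S N" by simp
  qed
  show ?thesis using p1 p2 p3 p4 p5 by blast
qed

end
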